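(* Let $X$ be a real Banach space and $\varphi\colon X\to(-\infty,\infty]$ a closed (lower semicontinuous), convex, proper function. Then $\varphi$ is an Orlicz function on $X$ if and only if its convex conjugate $\varphi^*\colon X^*\to(-\infty,\infty]$, $\varphi^*(x')=\sup_{x\in X}(\langle x',x\rangle-\varphi(x))$, is an Orlicz function on $X^*$.
   Context: An Orlicz function on a Banach space $Z$ is an even, convex, lower semicontinuous, proper function $\psi\colon Z\to(-\infty,\infty]$ such that $\lim_{z\to 0}\psi(z)=0$ and $\lim_{\|z\|\to\infty}\psi(z)=+\infty$ (such a function is automatically nonnegative). *)

theory Defs
  imports "HOL-Analysis.Analysis"
begin

text \<open>Extended-real valued functions \<open>Z \<Rightarrow> (-\<infinity>,\<infinity>]\<close> are modelled as \<open>Z \<Rightarrow> ereal\<close>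
  together with the requirement that \<open>-\<infinity>\<close> is never attained (part of properness).\<close>

definition ereal_convex :: "('a::real_vector \<Rightarrow> ereal) \<Rightarrow> bool" where
  "ereal_convex f \<longleftrightarrow>
     (\<forall>x y. \<forall>t::real. 0 < t \<and> t < 1 \<longrightarrow>
        f (t *\<^sub>R x + (1 - t) *\<^sub>R y) \<le> ereal t * f x + ereal (1 - t) * f y)"

definition ereal_lsc :: "('a::topological_space \<Rightarrow> ereal) \<Rightarrow> bool" where
  "ereal_lsc f \<longleftrightarrow> (\<forall>c. closed {x. f x \<le> c})"

definition ereal_proper :: "('a \<Rightarrow> ereal) \<Rightarrow> bool" where
  "ereal_proper f \<longleftrightarrow> (\<forall>x. f x \<noteq> -\<infinity>) \<and> (\<exists>x. f x \<noteq> \<infinity>)"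

definition ereal_even :: "('a::real_vector \<Rightarrow> ereal) \<Rightarrow> bool" where
  "ereal_even f \<longleftrightarrow> (\<forall>x. f (- x) = f x)"

definition orlicz_function :: "('a::banach \<Rightarrow> ereal) \<Rightarrow> bool" where
  "orlicz_function \<psi> \<longleftrightarrow>
     ereal_even \<psi> \<and> ereal_convex \<psi> \<and> ereal_lsc \<psi> \<and> ereal_proper \<psi> \<and>
     (\<psi> \<longlongrightarrow> 0) (at 0) \<and> (\<psi> \<longlongrightarrow> \<infinity>) at_infinity"

definition convex_conjugate :: "('a::real_normed_vector \<Rightarrow> ereal) \<Rightarrow> ('a \<Rightarrow>\<^sub>L real) \<Rightarrow> ereal" where
  "convex_conjugate \<phi> x' = (SUP x. ereal (blinfun_apply x' x) - \<phi> x)"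

end

theory Submission
  imports Defs
begin


lemma HB:
  fixes p :: "'a::real_vector \<Rightarrow> real"
  assumes sub: "\<And>x y. p (x + y) \<le> p x + p y"
    and hom: "\<And>c x. c > 0 \<Longrightarrow> p (c *\<^sub>R x) \<le> c * p x"
    and w: "w \<noteq> 0" and dom: "\<And>s. s * a \<le> p (s *\<^sub>R w)"
  shows "\<exists>F. linear F \<and> F w = a \<and> (\<forall>x. F x \<le> p x)"
proof -
  have homeq: "p (c *\<^sub>R x) = c * p x" if "c > 0" for c x
  proof -
    have "p x = p (inverse c *\<^sub>R (c *\<^sub>R x))" using that by simp
    also have "\<dots> \<le> inverse c * p (c *\<^sub>R x)" using hom[of "inverse c" "c *\<^sub>R x"] that by simp
    finally have "c * p x \<le> p (c *\<^sub>R x)" using that by (simp add: field_simps)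
    with hom[OF that, of x] show ?thesis by linarith
  qed
  define A where "A = {G :: ('a \<times> real) set. subspace G \<and>
      (\<forall>x b b'. (x,b)\<in>G \<longrightarrow> (x,b')\<in>G \<longrightarrow> b = b') \<and>
      (\<forall>x b. (x,b)\<in>G \<longrightarrow> b \<le> p x) \<and> (w,a) \<in> G}"
  define G0 where "G0 = span {(w,a)}"
  have G0: "G0 \<in> A"
  proof -
    have G0r: "G0 = range (\<lambda>k. (k *\<^sub>R w, k * a))"
      unfolding G0_def span_singleton by auto
    show ?thesis unfolding A_def
    proof (intro CollectI conjI allI impI)
      show "subspace G0" unfolding G0_def by (rule subspace_span)
      show "(w,a) \<in> G0" unfolding G0_def by (simp add: span_base)
      fix x b b' assume "(x,b) \<in> G0" "(x,b') \<in> G0"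
      then obtain k k' where e: "(x,b) = (k *\<^sub>R w, k * a)" "(x,b') = (k' *\<^sub>R w, k' * a)"
        unfolding G0r by blast
      then have "k = k'" using w by (metis Pair_inject scaleR_cancel_right)
      then show "b = b'" using e by simp
    next
      fix x b assume "(x,b) \<in> G0"
      then obtain k where "(x,b) = (k *\<^sub>R w, k * a)" unfolding G0r by blast
      then show "b \<le> p x" using dom[of k] by simp
    qed
  qed
  have "\<exists>M\<in>A. \<forall>X\<in>A. M \<subseteq> X \<longrightarrow> X = M"
  proof (rule Zorn_Lemma2, intro ballI)
    fix C assume C: "C \<in> chains A"
    show "\<exists>U\<in>A. \<forall>X\<in>C. X \<subseteq> U"
    proof (cases "C = {}")
      case True then show ?thesis using G0 by auto
    next
      case False
      have CA: "C \<subseteq> A" and ch: "\<And>X Y. X \<in> C \<Longrightarrow> Y \<in> C \<Longrightarrow> X \<subseteq> Y \<or> Y \<subseteq> X"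
        using C unfolding chains_def chain_subset_def by auto
      have sub: "subspace X" if "X \<in> C" for X using CA that unfolding A_def by auto
      have "\<Union>C \<in> A" unfolding A_def
      proof (intro CollectI conjI allI impI)
        show "subspace (\<Union>C)" unfolding subspace_def
        proof (intro conjI ballI allI)
          obtain X where "X \<in> C" using False by auto
          then show "0 \<in> \<Union>C" using sub[of X] subspace_0 by blast
        next
          fix x y assume "x \<in> \<Union>C" "y \<in> \<Union>C"
          then obtain X Y where XY: "X \<in> C" "Y \<in> C" "x \<in> X" "y \<in> Y" by auto
          show "x + y \<in> \<Union>C"
            using ch[OF XY(1,2)] XY sub[of X] sub[of Y] subspace_add by blast
        next
          fix c x assume "x \<in> \<Union>C"
          then obtain X where "X \<in> C" "x \<in> X" by auto
          then show "c *\<^sub>R x \<in> \<Union>C" using sub[of X] subspace_scale by blast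
        qed
      next
        fix x b b' assume "(x,b) \<in> \<Union>C" "(x,b') \<in> \<Union>C"
        then obtain X Y where XY: "X \<in> C" "Y \<in> C" "(x,b) \<in> X" "(x,b') \<in> Y" by auto
        show "b = b'" using ch[OF XY(1,2)] XY CA unfolding A_def by blast
      next
        fix x b assume "(x,b) \<in> \<Union>C"
        then show "b \<le> p x" using CA unfolding A_def by blast
      next
        obtain X where "X \<in> C" using False by auto
        then show "(w,a) \<in> \<Union>C" using CA unfolding A_def by blast
      qed
      then show ?thesis by auto
    qed
  qed
  then obtain M where MA: "M \<in> A" and Mmax: "\<And>X. X \<in> A \<Longrightarrow> M \<subseteq> X \<Longrightarrow> X = M" by blast
  have Msub: "subspace M" and Mfun: "\<And>x b b'. (x,b)\<in>M \<Longrightarrow> (x,b')\<in>M \<Longrightarrow> b = b'"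
    and Mdom: "\<And>x b. (x,b)\<in>M \<Longrightarrow> b \<le> p x" and Mw: "(w,a) \<in> M"
    using MA unfolding A_def by auto
  have Madd: "(x + y, b + b') \<in> M" if "(x,b) \<in> M" "(y,b') \<in> M" for x y b b'
    using subspace_add[OF Msub that] by simp
  have Mscale: "(c *\<^sub>R x, c * b) \<in> M" if "(x,b) \<in> M" for c x b
    using subspace_scale[OF Msub that, of c] by simp
  have M0: "(0,0) \<in> M" using subspace_0[OF Msub] by (simp add: zero_prod_def)
  have total: "\<exists>b. (v,b) \<in> M" for v
  proof (rule ccontr)
    assume nv: "\<nexists>b. (v,b) \<in> M"
    define S where "S = {b - p (x - v) | x b. (x,b) \<in> M}"
    have bnd: "b - p (x - v) \<le> p (y + v) - b'" if "(x,b) \<in> M" "(y,b') \<in> M" for x b y b'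
    proof -
      have "b + b' \<le> p (x + y)" using Mdom[OF Madd[OF that]] .
      also have "\<dots> \<le> p (x - v) + p (y + v)" using sub[of "x - v" "y + v"] by simp
      finally show ?thesis by simp
    qed
    define c where "c = Sup S"
    have Sne: "S \<noteq> {}" using M0 unfolding S_def by auto
    have Sbdd: "bdd_above S" unfolding S_def bdd_above_def using bnd[OF _ M0] by auto
    have c1: "b - p (x - v) \<le> c" if "(x,b) \<in> M" for x b
      unfolding c_def by (rule cSup_upper[OF _ Sbdd]) (use that S_def in auto)
    have c2: "c \<le> p (y + v) - b'" if "(y,b') \<in> M" for y b'
      unfolding c_def by (rule cSup_least[OF Sne]) (use that S_def bnd in auto)
    define M' where "M' = {(x + l *\<^sub>R v, b + l * c) | x b l. (x,b) \<in> M}"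
    have "M' \<in> A" unfolding A_def
    proof (intro CollectI conjI allI impI)
      show "subspace M'" unfolding subspace_def
      proof (intro conjI ballI allI)
        have "(0::'a \<times> real) = (0 + 0 *\<^sub>R v, 0 + 0 * c)" by (simp add: zero_prod_def)
        then show "0 \<in> M'" unfolding M'_def using M0 by blast
      next
        fix u u' assume "u \<in> M'" "u' \<in> M'"
        then obtain x b l x' b' l' where "u = (x + l *\<^sub>R v, b + l * c)" "(x,b) \<in> M"
          "u' = (x' + l' *\<^sub>R v, b' + l' * c)" "(x',b') \<in> M" unfolding M'_def by blast
        then have "u + u' = ((x + x') + (l + l') *\<^sub>R v, (b + b') + (l + l') * c)"
          by (simp add: algebra_simps)
        then show "u + u' \<in> M'" unfolding M'_def using Madd[OF \<open>(x,b) \<in> M\<close> \<open>(x',b') \<in> M\<close>] by blast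
      next
        fix k u assume "u \<in> M'"
        then obtain x b l where "u = (x + l *\<^sub>R v, b + l * c)" "(x,b) \<in> M" unfolding M'_def by blast
        then have "k *\<^sub>R u = (k *\<^sub>R x + (k * l) *\<^sub>R v, k * b + (k * l) * c)"
          by (simp add: algebra_simps)
        then show "k *\<^sub>R u \<in> M'" unfolding M'_def using Mscale[OF \<open>(x,b) \<in> M\<close>, of k] by blast
      qed
    next
      fix y d d' assume "(y,d) \<in> M'" "(y,d') \<in> M'"
      then obtain x b l x' b' l' where e: "y = x + l *\<^sub>R v" "d = b + l * c" "(x,b) \<in> M"
          "y = x' + l' *\<^sub>R v" "d' = b' + l' * c" "(x',b') \<in> M" unfolding M'_def by blast
      have "l = l'"
      proof (rule ccontr)
        assume "l \<noteq> l'"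
        have "(x - x', b - b') \<in> M" using Madd[OF e(3) Mscale[OF e(6), of "-1"]] by simp
        from Mscale[OF this, of "inverse (l' - l)"]
        have "(inverse (l' - l) *\<^sub>R (x - x'), inverse (l' - l) * (b - b')) \<in> M" .
        moreover have "inverse (l' - l) *\<^sub>R (x - x') = v"
        proof -
          have "x - x' = (l' - l) *\<^sub>R v" using e(1,4) by (simp add: algebra_simps)
          then show ?thesis using \<open>l \<noteq> l'\<close> by simp
        qed
        ultimately show False using nv by auto
      qed
      then have "x = x'" using e by simp
      then have "b = b'" using Mfun e by blast
      then show "d = d'" using e \<open>l = l'\<close> by simp
    next
      fix y d assume "(y,d) \<in> M'"
      then obtain x b l where e: "y = x + l *\<^sub>R v" "d = b + l * c" "(x,b) \<in> M" unfolding M'_def by blast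
      show "d \<le> p y"
      proof (cases l "0::real" rule: linorder_cases)
        case equal then show ?thesis using e Mdom by simp
      next
        case greater
        have "c \<le> p (inverse l *\<^sub>R x + v) - inverse l * b"
          using c2[OF Mscale[OF e(3), of "inverse l"]] .
        then have "l * c \<le> l * p (inverse l *\<^sub>R x + v) - b"
          using greater by (simp add: field_simps)
        also have "l * p (inverse l *\<^sub>R x + v) = p (l *\<^sub>R (inverse l *\<^sub>R x + v))"
          using homeq[OF greater] by simp
        also have "l *\<^sub>R (inverse l *\<^sub>R x + v) = y" using e greater by (simp add: algebra_simps)
        finally show ?thesis using e by simp
      next
        case less
        define m where "m = - l"
        have m: "m > 0" using less m_def by simp
        have "inverse m * b - p (inverse m *\<^sub>R x - v) \<le> c"
          using c1[OF Mscale[OF e(3), of "inverse m"]] .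
        then have "b - m * p (inverse m *\<^sub>R x - v) \<le> m * c"
          using m by (simp add: field_simps)
        also have "m * p (inverse m *\<^sub>R x - v) = p (m *\<^sub>R (inverse m *\<^sub>R x - v))"
          using homeq[OF m] by simp
        also have "m *\<^sub>R (inverse m *\<^sub>R x - v) = y" using e m by (simp add: algebra_simps m_def)
        finally show ?thesis using e m_def by simp
      qed
    next
      have "(w,a) = (w + 0 *\<^sub>R v, a + 0 * c)" by simp
      then show "(w,a) \<in> M'" unfolding M'_def using Mw by blast
    qed
    moreover have "M \<subseteq> M'"
    proof
      fix u assume "u \<in> M"
      moreover obtain x b where "u = (x,b)" by fastforce
      moreover have "(x,b) = (x + 0 *\<^sub>R v, b + 0 * c)" by simp
      ultimately show "u \<in> M'" unfolding M'_def by blast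
    qed
    ultimately have "M' = M" using Mmax by blast
    moreover have "(v, c) \<in> M'"
    proof -
      have "(v,c) = (0 + 1 *\<^sub>R v, 0 + 1 * c)" by simp
      then show ?thesis unfolding M'_def using M0 by blast
    qed
    ultimately show False using nv by auto
  qed
  define F where "F x = (THE b. (x,b) \<in> M)" for x
  have FM: "(x, F x) \<in> M" for x
    unfolding F_def using total[of x] Mfun by (metis theI)
  have Funiq: "F x = b" if "(x,b) \<in> M" for x b using Mfun[OF FM that] .
  have "linear F"
  proof (rule linearI)
    show "F (x + y) = F x + F y" for x y using Funiq[OF Madd[OF FM FM]] .
    show "F (c *\<^sub>R x) = c *\<^sub>R F x" for c x using Funiq[OF Mscale[OF FM]] by simp
  qed
  moreover have "F w = a" using Funiq[OF Mw] .
  moreover have "F x \<le> p x" for x using Mdom[OF FM] .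
  ultimately show ?thesis by blast
qed


lemma gauge_sep:
  fixes U :: "'a::real_normed_vector set"
  assumes cU: "convex U" and r: "r > 0" and bU: "ball 0 r \<subseteq> U" and wU: "w \<notin> U"
  shows "\<exists>F. linear F \<and> F w = 1 \<and> (\<forall>x. F x \<le> norm x / r) \<and> (\<forall>u\<in>U. F u \<le> 1)"
proof -
  define S where "S x = {l. 0 < l \<and> inverse l *\<^sub>R x \<in> U}" for x
  define p where "p x = Inf (S x)" for x
  have U0: "0 \<in> U" using bU r by auto
  have big: "l \<in> S x" if "l > norm x / r" for l x
  proof -
    have lp: "l > 0" using that r by (smt (verit) divide_nonneg_pos norm_ge_zero)
    have "norm (inverse l *\<^sub>R x) = norm x / l" using lp by (simp add: divide_inverse mult.commute)
    also have "\<dots> < r" using that lp r by (simp add: field_simps)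
    finally show ?thesis unfolding S_def using lp bU by auto
  qed
  have Sne: "S x \<noteq> {}" for x
  proof -
    have "norm x / r + 1 \<in> S x" by (rule big) simp
    then show ?thesis by auto
  qed
  have Sbdd: "bdd_below (S x)" for x by (rule bdd_belowI[of _ 0]) (auto simp: S_def)
  have pge: "p x \<le> l" if "l \<in> S x" for x l unfolding p_def by (rule cInf_lower[OF that Sbdd])
  have p0: "0 \<le> p x" for x unfolding p_def by (rule cInf_greatest[OF Sne]) (auto simp: S_def)
  have pbound: "p x \<le> norm x / r" for x
  proof (rule field_le_epsilon)
    fix e :: real assume "e > 0"
    then have "norm x / r + e \<in> S x" by (intro big) simp
    then show "p x \<le> norm x / r + e" using pge by auto
  qed
  have hom: "p (c *\<^sub>R x) \<le> c * p x" if c: "c > 0" for c x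
  proof -
    have "p (c *\<^sub>R x) / c \<le> p x" unfolding p_def[of x]
    proof (rule cInf_greatest[OF Sne])
      fix l assume "l \<in> S x"
      then have l: "0 < l" "inverse l *\<^sub>R x \<in> U" by (auto simp: S_def)
      have eq: "inverse (c * l) *\<^sub>R (c *\<^sub>R x) = inverse l *\<^sub>R x" using c by simp
      have "inverse (c * l) *\<^sub>R (c *\<^sub>R x) \<in> U" by (subst eq) (rule l(2))
      then have "c * l \<in> S (c *\<^sub>R x)" unfolding S_def using c l(1) by (intro CollectI conjI) auto
      then have "p (c *\<^sub>R x) \<le> c * l" by (rule pge)
      then show "p (c *\<^sub>R x) / c \<le> l" using c by (simp add: field_simps)
    qed
    then show ?thesis using c by (simp add: field_simps)
  qed
  have sub: "p (x + y) \<le> p x + p y" for x y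
  proof -
    have key: "l + m \<in> S (x + y)" if "l \<in> S x" "m \<in> S y" for l m
    proof -
      have l: "l > 0" "inverse l *\<^sub>R x \<in> U" and m: "m > 0" "inverse m *\<^sub>R y \<in> U"
        using that unfolding S_def by auto
      have "(l / (l + m)) *\<^sub>R (inverse l *\<^sub>R x) + (m / (l + m)) *\<^sub>R (inverse m *\<^sub>R y) \<in> U"
        by (rule convexD[OF cU l(2) m(2)]) (use l m in \<open>auto simp: divide_simps\<close>)
      moreover have "(l / (l + m)) *\<^sub>R (inverse l *\<^sub>R x) + (m / (l + m)) *\<^sub>R (inverse m *\<^sub>R y)
          = inverse (l + m) *\<^sub>R (x + y)"
      proof -
        have c1: "l / (l + m) * inverse l = inverse (l + m)" using l(1) m(1) by (simp add: field_simps)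
        have c2: "m / (l + m) * inverse m = inverse (l + m)" using l(1) m(1) by (simp add: field_simps)
        show ?thesis by (simp only: scaleR_scaleR c1 c2 scaleR_add_right)
      qed
      ultimately show ?thesis using l m unfolding S_def by auto
    qed
    have "p (x + y) - p y \<le> p x" unfolding p_def[of x]
    proof (rule cInf_greatest[OF Sne])
      fix l assume l: "l \<in> S x"
      have "p (x + y) - l \<le> p y" unfolding p_def[of y]
      proof (rule cInf_greatest[OF Sne])
        fix m assume "m \<in> S y"
        then show "p (x + y) - l \<le> m" using pge[OF key[OF l]] by force
      qed
      then show "p (x + y) - p y \<le> l" by simp
    qed
    then show ?thesis by simp
  qed
  have pw: "1 \<le> p w"
  proof (rule ccontr)
    assume "\<not> 1 \<le> p w"
    then have "Inf (S w) < 1" unfolding p_def by simp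
    then obtain l where l: "l \<in> S w" "l < 1" using cInf_lessD[OF Sne] by blast
    then have lp: "l > 0" "inverse l *\<^sub>R w \<in> U" unfolding S_def by auto
    have "l *\<^sub>R (inverse l *\<^sub>R w) + (1 - l) *\<^sub>R 0 \<in> U"
      by (rule convexD[OF cU lp(2) U0]) (use lp l(2) in auto)
    then show False using wU lp by simp
  qed
  have w0: "w \<noteq> 0" using wU U0 by auto
  have dom: "s * 1 \<le> p (s *\<^sub>R w)" for s
  proof (cases "s > 0")
    case True
    have "p w = p (inverse s *\<^sub>R (s *\<^sub>R w))" using True by simp
    also have "\<dots> \<le> inverse s * p (s *\<^sub>R w)" using hom[of "inverse s" "s *\<^sub>R w"] True by simp
    finally have "s * p w \<le> p (s *\<^sub>R w)" using True by (simp add: field_simps)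
    moreover have "s * 1 \<le> s * p w" using pw True by (intro mult_left_mono) auto
    ultimately show ?thesis by linarith
  next
    case False then show ?thesis using p0[of "s *\<^sub>R w"] by simp
  qed
  obtain F where F: "linear F" "F w = 1" "\<And>x. F x \<le> p x"
    using HB[of p w 1, OF sub hom w0 dom] by blast
  have "\<forall>u\<in>U. F u \<le> 1"
  proof
    fix u assume "u \<in> U"
    then have "1 \<in> S u" unfolding S_def by auto
    then show "F u \<le> 1" using F(3)[of u] pge by fastforce
  qed
  then show ?thesis using F pbound by (meson order_trans)
qed

lemma separation:
  fixes C :: "'a::real_normed_vector set"
  assumes cC: "convex C" and clC: "closed C" and c0: "c0 \<in> C" and z: "z \<notin> C"
  shows "\<exists>F K g. linear F \<and> (\<forall>x. \<bar>F x\<bar> \<le> K * norm x) \<and> g > 0 \<and> (\<forall>c\<in>C. F c \<le> F z - g)"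
proof -
  have "open (- C)" using clC by (simp add: closed_def)
  then obtain r where r0: "r > 0" "ball z r \<subseteq> - C" using z open_contains_ball by blast
  then have r: "r > 0" "ball z r \<inter> C = {}" by auto
  define U where "U = {c - c0 + b | c b. c \<in> C \<and> b \<in> ball 0 r}"
  have cU: "convex U" unfolding convex_def
  proof (intro ballI allI impI)
    fix x y :: 'a and u v :: real
    assume "x \<in> U" "y \<in> U" and uv: "0 \<le> u" "0 \<le> v" "u + v = 1"
    then obtain c b c' b' where e: "x = c - c0 + b" "c \<in> C" "b \<in> ball 0 r"
      "y = c' - c0 + b'" "c' \<in> C" "b' \<in> ball 0 r" unfolding U_def by blast
    have "u *\<^sub>R c + v *\<^sub>R c' \<in> C" using cC e uv unfolding convex_def by blast
    moreover have "u *\<^sub>R b + v *\<^sub>R b' \<in> ball 0 r" using convex_ball[of 0 r] e uv unfolding convex_def by blast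
    moreover have "u *\<^sub>R x + v *\<^sub>R y = (u *\<^sub>R c + v *\<^sub>R c') - c0 + (u *\<^sub>R b + v *\<^sub>R b')"
    proof -
      have "u *\<^sub>R x + v *\<^sub>R y = (u *\<^sub>R c + v *\<^sub>R c') - (u + v) *\<^sub>R c0 + (u *\<^sub>R b + v *\<^sub>R b')"
        unfolding e(1) e(4) by (simp add: algebra_simps)
      then show ?thesis using uv by simp
    qed
    ultimately show "u *\<^sub>R x + v *\<^sub>R y \<in> U" unfolding U_def by blast
  qed
  have bU: "ball 0 r \<subseteq> U"
  proof
    fix b assume "b \<in> ball (0::'a) r"
    moreover have "b = c0 - c0 + b" by simp
    ultimately show "b \<in> U" unfolding U_def using c0 by blast
  qed
  have wU: "z - c0 \<notin> U"
  proof
    assume "z - c0 \<in> U"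
    then obtain c b where "z - c0 = c - c0 + b" "c \<in> C" "b \<in> ball 0 r" unfolding U_def by blast
    then have "c \<in> ball z r" by (simp add: dist_norm)
    then show False using r \<open>c \<in> C\<close> by auto
  qed
  obtain F where F: "linear F" "F (z - c0) = 1" "\<And>x. F x \<le> norm x / r" "\<And>u. u \<in> U \<Longrightarrow> F u \<le> 1"
    using gauge_sep[OF cU r(1) bU wU] by blast
  have "0 \<in> U" using bU r(1) by auto
  then have w0: "z - c0 \<noteq> 0" using wU by auto
  define w where "w = z - c0"
  define g where "g = r / (2 * norm w)"
  have g: "g > 0" using w0 r unfolding g_def w_def by simp
  have absF: "\<bar>F x\<bar> \<le> (1 / r) * norm x" for x
  proof -
    have "- F x = F (- x)" using linear_neg[OF F(1)] by simp
    then have "- F x \<le> norm x / r" using F(3)[of "- x"] by simp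
    then show ?thesis using F(3)[of x] by (simp add: abs_le_iff)
  qed
  have "F c \<le> F z - g" if c: "c \<in> C" for c
  proof -
    define b where "b = (r / (2 * norm w)) *\<^sub>R w"
    have nb: "norm b = r / 2" using w0 r unfolding b_def w_def by simp
    then have "b \<in> ball 0 r" using r by simp
    then have "c - c0 + b \<in> U" unfolding U_def using c by blast
    then have "F (c - c0 + b) \<le> 1" by (rule F(4))
    moreover have "F (c - c0 + b) = F c - F c0 + g * F w"
      using F(1) unfolding b_def g_def by (simp add: linear_add linear_diff linear_scale)
    moreover have "F w = 1" "F z = 1 + F c0" using F(2) linear_diff[OF F(1)] unfolding w_def by auto
    ultimately show ?thesis by simp
  qed
  then show ?thesis using F(1) absF g by blast
qed

lemma norming:
  fixes x :: "'a::real_normed_vector"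
  shows "\<exists>y::'a \<Rightarrow>\<^sub>L real. norm y \<le> 1 \<and> blinfun_apply y x = norm x"
proof (cases "x = 0")
  case True
  then show ?thesis by (intro exI[of _ 0]) simp
next
  case False
  have dom: "s * norm x \<le> norm (s *\<^sub>R x)" for s
    by (simp add: mult_right_mono)
  obtain F where F: "linear F" "F x = norm x" "\<And>v. F v \<le> norm v"
    using HB[of norm x "norm x", OF norm_triangle_ineq _ False dom] by auto
  have absF: "norm (F v) \<le> 1 * norm v" for v
  proof -
    have "- F v = F (- v)" using linear_neg[OF F(1)] by simp
    then have "- F v \<le> norm v" using F(3)[of "- v"] by simp
    then show ?thesis using F(3)[of v] by (simp add: abs_le_iff)
  qed
  have bl: "bounded_linear F"
    by (rule bounded_linear_intro[where K=1]) (use F(1) absF in \<open>auto simp: linear_add linear_scale\<close>)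
  show ?thesis
    by (rule exI[of _ "Blinfun F"])
       (simp add: bounded_linear_Blinfun_apply[OF bl] F(2) norm_blinfun_bound absF,
        rule norm_blinfun_bound, simp_all add: bounded_linear_Blinfun_apply[OF bl],
        metis absF mult_1 real_norm_def)
qed




lemma conj_upper: "ereal (blinfun_apply y x) - \<phi> x \<le> convex_conjugate \<phi> y"
  unfolding convex_conjugate_def by (rule SUP_upper) simp

lemma conj_le:
  assumes "\<And>v s. \<phi> v = ereal s \<Longrightarrow> blinfun_apply y v - s \<le> m" and "\<And>v. \<phi> v \<noteq> -\<infinity>"
  shows "convex_conjugate \<phi> y \<le> ereal m"
  unfolding convex_conjugate_def
proof (rule SUP_least)
  fix v
  show "ereal (blinfun_apply y v) - \<phi> v \<le> ereal m"
    using assms(1)[of v] assms(2)[of v] by (cases "\<phi> v") auto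
qed

lemma fenchel_young: "ereal (blinfun_apply y x) - convex_conjugate \<phi> y \<le> \<phi> x"
proof -
  have h: "ereal (blinfun_apply y x) - \<phi> x \<le> convex_conjugate \<phi> y" by (rule conj_upper)
  show ?thesis
    using h by (cases "\<phi> x"; cases "convex_conjugate \<phi> y") auto
qed

lemma epi_closed:
  fixes \<phi> :: "'a::real_normed_vector \<Rightarrow> ereal"
  assumes "ereal_lsc \<phi>"
  shows "closed {q. \<phi> (fst q) \<le> ereal (snd q)}"
  unfolding closed_def
proof (rule open_prod_intro)
  fix q assume "q \<in> - {q. \<phi> (fst q) \<le> ereal (snd q)}"
  then obtain x0 s0 where q: "q = (x0, s0)" "ereal s0 < \<phi> x0" by (cases q) auto
  obtain s1 where s1: "ereal s0 < ereal s1" "ereal s1 < \<phi> x0" using ereal_dense2[OF q(2)] by blast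
  have "open (- {v. \<phi> v \<le> ereal s1})" using assms unfolding ereal_lsc_def by auto
  moreover have "open {..<s1}" by simp
  moreover have "q \<in> (- {v. \<phi> v \<le> ereal s1}) \<times> {..<s1}" using q s1 by auto
  moreover have "(- {v. \<phi> v \<le> ereal s1}) \<times> {..<s1} \<subseteq> - {q. \<phi> (fst q) \<le> ereal (snd q)}"
  proof
    fix p assume "p \<in> (- {v. \<phi> v \<le> ereal s1}) \<times> {..<s1}"
    then have "ereal (snd p) < ereal s1" "ereal s1 < \<phi> (fst p)" by (auto simp: not_le)
    then have "ereal (snd p) < \<phi> (fst p)" by (rule less_trans)
    then show "p \<in> - {q. \<phi> (fst q) \<le> ereal (snd q)}" by auto
  qed
  ultimately show "\<exists>A B. open A \<and> open B \<and> q \<in> A \<times> B \<and> A \<times> B \<subseteq> - {q. \<phi> (fst q) \<le> ereal (snd q)}"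
    by blast
qed

lemma epi_convex:
  fixes \<phi> :: "'a::real_normed_vector \<Rightarrow> ereal"
  assumes "ereal_convex \<phi>"
  shows "convex {q. \<phi> (fst q) \<le> ereal (snd q)}"
proof (rule convexI)
  fix q1 q2 :: "'a \<times> real" and u v :: real
  assume q1: "q1 \<in> {q. \<phi> (fst q) \<le> ereal (snd q)}" and q2: "q2 \<in> {q. \<phi> (fst q) \<le> ereal (snd q)}"
    and uv: "0 \<le> u" "0 \<le> v" "u + v = 1"
  obtain x1 s1 x2 s2 where e: "q1 = (x1, s1)" "q2 = (x2, s2)" by fastforce
  have h1: "\<phi> x1 \<le> ereal s1" and h2: "\<phi> x2 \<le> ereal s2" using q1 q2 e by auto
  show "u *\<^sub>R q1 + v *\<^sub>R q2 \<in> {q. \<phi> (fst q) \<le> ereal (snd q)}"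
  proof (cases "u = 0 \<or> u = 1")
    case True
    then show ?thesis using uv h1 h2 e by auto
  next
    case False
    then have u: "0 < u" "u < 1" and v: "v = 1 - u" using uv by auto
    have "\<phi> (u *\<^sub>R x1 + (1 - u) *\<^sub>R x2) \<le> ereal u * \<phi> x1 + ereal (1 - u) * \<phi> x2"
      using assms u unfolding ereal_convex_def by blast
    also have "\<dots> \<le> ereal u * ereal s1 + ereal (1 - u) * ereal s2"
      using u h1 h2 by (intro add_mono ereal_mult_left_mono) auto
    also have "\<dots> = ereal (u * s1 + (1 - u) * s2)" by simp
    finally show ?thesis using e v by simp
  qed
qed

lemma fenchel_moreau:
  fixes \<phi> :: "'a::real_normed_vector \<Rightarrow> ereal"
  assumes lsc: "ereal_lsc \<phi>" and cvx: "ereal_convex \<phi>" and prp: "ereal_proper \<phi>"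
    and y0: "convex_conjugate \<phi> y0 \<noteq> \<infinity>"
  shows "\<phi> x \<le> (SUP y. ereal (blinfun_apply y x) - convex_conjugate \<phi> y)"
proof (rule ccontr)
  define E where "E = {q::'a \<times> real. \<phi> (fst q) \<le> ereal (snd q)}"
  define R where "R = (SUP y. ereal (blinfun_apply y x) - convex_conjugate \<phi> y)"
  assume "\<not> \<phi> x \<le> (SUP y. ereal (blinfun_apply y x) - convex_conjugate \<phi> y)"
  then have "R < \<phi> x" unfolding R_def by simp
  then obtain t where t: "R < ereal t" "ereal t < \<phi> x" using ereal_dense2 by blast
  have Rge: "ereal (blinfun_apply y x) - convex_conjugate \<phi> y \<le> R" for y
    unfolding R_def by (rule SUP_upper) simp
  have nm: "\<phi> v \<noteq> -\<infinity>" for v using prp unfolding ereal_proper_def by auto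
  obtain x1 where "\<phi> x1 \<noteq> \<infinity>" using prp unfolding ereal_proper_def by auto
  then obtain s1 where s1: "\<phi> x1 = ereal s1" using nm[of x1] by (cases "\<phi> x1") auto
  have E1: "(x1, s) \<in> E" if "s \<ge> s1" for s using s1 that unfolding E_def by auto
  have zE: "(x, t) \<notin> E" using t unfolding E_def by auto
  obtain F K g where F: "linear F" "\<And>q. \<bar>F q\<bar> \<le> K * norm q" "g > 0"
      "\<And>q. q \<in> E \<Longrightarrow> F q \<le> F (x, t) - g"
  proof -
    have cE: "convex E" unfolding E_def by (rule epi_convex[OF cvx])
    have clE: "closed E" unfolding E_def by (rule epi_closed[OF lsc])
    show ?thesis using separation[OF cE clE E1[OF order_refl] zE] that by blast
  qed
  define l where "l v = F (v, 0)" for v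
  define b where "b = F (0, 1)"
  have Fsplit: "F (v, s) = l v + s * b" for v s
  proof -
    have "(v, s) = (v, 0) + s *\<^sub>R (0, 1)" by simp
    then have "F (v, s) = F (v, 0) + s *\<^sub>R F (0, 1)"
      by (simp only: linear_add[OF F(1), symmetric] linear_scale[OF F(1), symmetric])
    then show ?thesis unfolding l_def b_def by simp
  qed
  have l_lin: "linear l"
  proof (rule linearI)
    fix u v :: 'a and c :: real
    have "(u + v, 0::real) = (u, 0) + (v, 0)" by simp
    then show "l (u + v) = l u + l v" unfolding l_def by (simp only: linear_add[OF F(1)])
    have "(c *\<^sub>R u, 0::real) = c *\<^sub>R (u, 0)" by simp
    then show "l (c *\<^sub>R u) = c *\<^sub>R l u" unfolding l_def by (simp only: linear_scale[OF F(1)])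
  qed
  have l_bd: "bounded_linear l"
  proof (rule bounded_linear_intro[where K=K])
    show "l (u + v) = l u + l v" for u v by (rule linear_add[OF l_lin])
    show "l (c *\<^sub>R u) = c *\<^sub>R l u" for c u by (rule linear_scale[OF l_lin])
    show "norm (l u) \<le> norm u * K" for u
      using F(2)[of "(u, 0)"] unfolding l_def by (simp add: mult.commute)
  qed
  have key: "l v + s * b \<le> l x + t * b - g" if "\<phi> v = ereal s" for v s
    using F(4)[of "(v, s)"] that unfolding E_def by (simp add: Fsplit)
  have b: "b \<le> 0"
  proof (rule ccontr)
    assume "\<not> b \<le> 0"
    then have bp: "b > 0" by simp
    define s where "s = max s1 ((l x + t * b - l x1) / b + 1)"
    have "F (x1, s) \<le> F (x, t) - g" using F(4) E1[of s] unfolding s_def by auto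
    then have "l x1 + s * b \<le> l x + t * b - g" by (simp add: Fsplit)
    moreover have "s * b \<ge> ((l x + t * b - l x1) / b + 1) * b"
      using bp unfolding s_def by (intro mult_right_mono) auto
    moreover have "((l x + t * b - l x1) / b + 1) * b = l x + t * b - l x1 + b"
      using bp by (simp add: field_simps)
    ultimately show False using bp F(3) by linarith
  qed
  show False
  proof (cases "b = 0")
    case False
    then have bn: "b < 0" using b by simp
    define y where "y = Blinfun (\<lambda>v. l v / (- b))"
    have bly: "bounded_linear (\<lambda>v. l v / (- b))" by (rule bounded_linear_compose[OF bounded_linear_divide l_bd])
    have yv: "blinfun_apply y v = l v / (- b)" for v unfolding y_def bounded_linear_Blinfun_apply[OF bly] ..
    have "convex_conjugate \<phi> y \<le> ereal (blinfun_apply y x - t)"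
    proof (rule conj_le[OF _ nm])
      fix v s assume "\<phi> v = ereal s"
      from key[OF this] have "l v - l x + (s - t) * b \<le> 0" using F(3) by (simp add: algebra_simps)
      then have A: "(l v - l x + (s - t) * b) / (- b) \<le> 0" using bn by (intro divide_nonpos_pos) auto
      have e: "l v / (- b) - s - (l x / (- b) - t) = (l v - l x + (s - t) * b) / (- b)"
        using bn by (simp add: field_simps)
      show "blinfun_apply y v - s \<le> blinfun_apply y x - t" unfolding yv using A e by linarith
    qed
    then have "ereal t \<le> ereal (blinfun_apply y x) - convex_conjugate \<phi> y"
      by (cases "convex_conjugate \<phi> y") auto
    then show False using Rge[of y] t(1) by simp
  next
    case True
    have conj_nm: "convex_conjugate \<phi> y0 \<noteq> -\<infinity>"
    proof -
      have "ereal (blinfun_apply y0 x1) - \<phi> x1 \<le> convex_conjugate \<phi> y0" by (rule conj_upper)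
      then show ?thesis using s1 by auto
    qed
    then obtain m where m: "convex_conjugate \<phi> y0 = ereal m" using y0 by (cases "convex_conjugate \<phi> y0") auto
    define lam where "lam = max 0 ((t - blinfun_apply y0 x + m) / g)"
    have lam: "lam \<ge> 0" "t \<le> blinfun_apply y0 x - m + lam * g"
    proof -
      show "lam \<ge> 0" unfolding lam_def by simp
      have "lam * g \<ge> ((t - blinfun_apply y0 x + m) / g) * g"
        unfolding lam_def using F(3) by (intro mult_right_mono) auto
      then show "t \<le> blinfun_apply y0 x - m + lam * g" using F(3) by simp
    qed
    define y where "y = y0 + lam *\<^sub>R Blinfun l"
    have yv: "blinfun_apply y v = blinfun_apply y0 v + lam * l v" for v
      unfolding y_def by (simp add: blinfun.add_left blinfun.scaleR_left bounded_linear_Blinfun_apply[OF l_bd])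
    have "convex_conjugate \<phi> y \<le> ereal (m + lam * (l x - g))"
    proof (rule conj_le[OF _ nm])
      fix v s assume vs: "\<phi> v = ereal s"
      have "ereal (blinfun_apply y0 v) - \<phi> v \<le> convex_conjugate \<phi> y0" by (rule conj_upper)
      then have h1: "blinfun_apply y0 v - s \<le> m" using vs m by simp
      have h2: "l v \<le> l x - g" using key[OF vs] True by simp
      have "lam * l v \<le> lam * (l x - g)" using h2 lam(1) by (rule mult_left_mono)
      then show "blinfun_apply y v - s \<le> m + lam * (l x - g)" unfolding yv using h1 by simp
    qed
    then have "ereal (blinfun_apply y x - (m + lam * (l x - g))) \<le> ereal (blinfun_apply y x) - convex_conjugate \<phi> y"
      by (cases "convex_conjugate \<phi> y") auto
    moreover have "blinfun_apply y x - (m + lam * (l x - g)) = blinfun_apply y0 x - m + lam * g"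
      unfolding yv by (simp add: algebra_simps)
    ultimately have "ereal t \<le> ereal (blinfun_apply y x) - convex_conjugate \<phi> y"
      using lam(2) by (metis ereal_less_eq(3) order_trans)
    then show False using Rge[of y] t(1) by simp
  qed
qed




lemma convex_apply:
  assumes "ereal_convex f" "0 < t" "t < 1"
  shows "f (t *\<^sub>R x + (1 - t) *\<^sub>R y) \<le> ereal t * f x + ereal (1 - t) * f y"
  using assms unfolding ereal_convex_def by blast

lemma half_sum_ereal: "ereal (1/2) * a + ereal (1/2) * a = (a::ereal)"
  by (cases a) auto

lemma orlicz_zero:
  fixes \<psi> :: "'b::banach \<Rightarrow> ereal" and z :: 'b
  assumes orl: "orlicz_function \<psi>" and z: "z \<noteq> 0"
  shows "\<psi> 0 = 0" and "\<And>x. 0 \<le> \<psi> x"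
proof -
  have ev: "\<And>x. \<psi> (- x) = \<psi> x" and cv: "ereal_convex \<psi>" and pr: "ereal_proper \<psi>"
    and lim: "(\<psi> \<longlongrightarrow> 0) (at 0)"
    using orl unfolding orlicz_function_def ereal_even_def by auto
  have mid: "\<psi> 0 \<le> \<psi> x" for x
  proof -
    have h: "(1::real) - 1/2 = 1/2" by simp
    have e0: "(1/2::real) *\<^sub>R x + (1/2::real) *\<^sub>R (- x) = 0" by (simp add: scaleR_right_diff_distrib)
    have "\<psi> ((1/2) *\<^sub>R x + (1 - 1/2) *\<^sub>R (- x)) \<le> ereal (1/2) * \<psi> x + ereal (1 - 1/2) * \<psi> (- x)"
      by (rule convex_apply[OF cv]) auto
    then show ?thesis unfolding h e0 ev half_sum_ereal .
  qed
  have pt: "\<exists>y::'b. y \<noteq> 0 \<and> norm y = r" if "r > 0" for r :: real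
  proof -
    have nz: "norm z > 0" using z by simp
    have "norm ((r / norm z) *\<^sub>R z) = \<bar>r / norm z\<bar> * norm z" by (rule norm_scaleR)
    also have "\<bar>r / norm z\<bar> = r / norm z" using nz that by simp
    also have "r / norm z * norm z = r" using nz by simp
    finally have nr: "norm ((r / norm z) *\<^sub>R z) = r" .
    then have "(r / norm z) *\<^sub>R z \<noteq> 0" using that by (metis norm_zero less_irrefl)
    then have "(r / norm z) *\<^sub>R z \<noteq> 0 \<and> norm ((r / norm z) *\<^sub>R z) = r" using nr by (rule conjI)
    then show ?thesis by (rule exI)
  qed
  have le0: "\<psi> 0 \<le> 0"
  proof (rule ccontr)
    assume "\<not> \<psi> 0 \<le> 0"
    then obtain e where e: "0 < ereal e" "ereal e < \<psi> 0" using ereal_dense2[of 0 "\<psi> 0"] by (auto simp: not_le)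
    have "eventually (\<lambda>y. \<psi> y < ereal e) (at 0)" using order_tendstoD(2)[OF lim e(1)] .
    then obtain d where d: "d > 0" "\<And>y. y \<noteq> 0 \<Longrightarrow> dist y 0 < d \<Longrightarrow> \<psi> y < ereal e"
      unfolding eventually_at by auto
    have "d / 2 > 0" using d(1) by simp
    then obtain y :: 'b where y: "y \<noteq> 0" "norm y = d / 2" using pt by blast
    have "\<psi> y < ereal e" using d y by auto
    then show False using mid[of y] e by auto
  qed
  have nm: "\<psi> 0 \<noteq> -\<infinity>" using pr unfolding ereal_proper_def by auto
  then obtain m where m: "\<psi> 0 = ereal m" using le0 by (cases "\<psi> 0") auto
  have "m \<ge> 0"
  proof (rule ccontr)
    assume "\<not> m \<ge> 0"
    then have mn: "m < 0" by simp
    define e where "e = - m / 4"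
    have e: "e > 0" using mn e_def by simp
    have "eventually (\<lambda>y. \<psi> y < ereal e) (at 0)" using order_tendstoD(2)[OF lim] e by simp
    moreover have "eventually (\<lambda>y. ereal (- e) < \<psi> y) (at 0)" using order_tendstoD(1)[OF lim] e by simp
    ultimately have "eventually (\<lambda>y. \<psi> y < ereal e \<and> ereal (- e) < \<psi> y) (at 0)"
      by (rule eventually_conj)
    then obtain d where d: "d > 0" "\<And>y. y \<noteq> 0 \<Longrightarrow> dist y 0 < d \<Longrightarrow> \<psi> y < ereal e \<and> ereal (- e) < \<psi> y"
      unfolding eventually_at by auto
    have "d / 4 > 0" using d(1) by simp
    then obtain y :: 'b where y: "y \<noteq> 0" "norm y = d / 4" using pt by blast
    have y1: "\<psi> y < ereal e \<and> ereal (- e) < \<psi> y" using d y by auto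
    have y2: "\<psi> (2 *\<^sub>R y) < ereal e \<and> ereal (- e) < \<psi> (2 *\<^sub>R y)" using d y by (intro d(2)) auto
    obtain c where c: "\<psi> y = ereal c" using y1 by (cases "\<psi> y") auto
    obtain a where a: "\<psi> (2 *\<^sub>R y) = ereal a" using y2 by (cases "\<psi> (2 *\<^sub>R y)") auto
    have "\<psi> ((1/2) *\<^sub>R (2 *\<^sub>R y) + (1 - 1/2) *\<^sub>R 0) \<le> ereal (1/2) * \<psi> (2 *\<^sub>R y) + ereal (1 - 1/2) * \<psi> 0"
      by (rule convex_apply[OF cv]) auto
    then have "c \<le> a / 2 + m / 2" using a c m by simp
    moreover have "c > - e" "a < e" using y1 y2 a c by auto
    ultimately show False using e_def mn by simp
  qed
  then show z0: "\<psi> 0 = 0" using m le0 by simp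
  show "0 \<le> \<psi> x" for x using mid[of x] z0 by simp
qed

lemma orlicz_coercive:
  fixes \<psi> :: "'b::banach \<Rightarrow> ereal"
  assumes orl: "orlicz_function \<psi>" and z0: "\<psi> 0 = 0"
  shows "\<exists>R>0. \<forall>x. R \<le> norm x \<longrightarrow> ereal (norm x / R) \<le> \<psi> x"
proof -
  have cv: "ereal_convex \<psi>" and lim: "(\<psi> \<longlongrightarrow> \<infinity>) at_infinity"
    using orl unfolding orlicz_function_def by auto
  have "eventually (\<lambda>x. ereal 1 < \<psi> x) at_infinity" using lim unfolding tendsto_PInfty by blast
  then obtain b where b: "\<And>x. b \<le> norm x \<Longrightarrow> ereal 1 < \<psi> x" unfolding eventually_at_infinity by auto
  define R where "R = max b 1"
  have R: "R > 0" "\<And>x. R \<le> norm x \<Longrightarrow> ereal 1 < \<psi> x" using b unfolding R_def by auto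
  have "ereal (norm x / R) \<le> \<psi> x" if x: "R \<le> norm x" for x
  proof (cases "norm x = R")
    case True
    then show ?thesis using R(2)[OF x] R(1) by simp
  next
    case False
    then have xR: "R < norm x" using x by simp
    define t where "t = R / norm x"
    have nx: "norm x > 0" using R(1) xR by linarith
    have x0: "x \<noteq> 0" using nx by auto
    have t: "0 < t" "t < 1" using R(1) xR nx x0 by (simp_all add: t_def)
    have "\<psi> (t *\<^sub>R x + (1 - t) *\<^sub>R 0) \<le> ereal t * \<psi> x + ereal (1 - t) * \<psi> 0"
      using cv t unfolding ereal_convex_def by blast
    then have le: "\<psi> (t *\<^sub>R x) \<le> ereal t * \<psi> x" using z0 by simp
    have "norm (t *\<^sub>R x) = R" using xR R(1) x0 unfolding t_def by simp
    then have "ereal 1 < \<psi> (t *\<^sub>R x)" using R(2) by simp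
    then have gt: "ereal 1 < ereal t * \<psi> x" using le by simp
    show ?thesis
    proof (cases "\<psi> x")
      case (real a)
      then have "1 < t * a" using gt by simp
      then have "1 / t < a" using t by (simp add: field_simps)
      moreover have "1 / t = norm x / R" unfolding t_def by simp
      ultimately show ?thesis using real by simp
    next
      case PInf then show ?thesis by simp
    next
      case MInf then show ?thesis using gt t by simp
    qed
  qed
  then show ?thesis using R(1) by blast
qed

lemma pair_bound:
  fixes g :: ereal
  assumes R: "R > 0" and n: "n \<ge> 0" and m: "m \<ge> 0" "m \<le> 1 / R" and a: "a \<le> n * m"
    and g1: "n \<le> R \<Longrightarrow> 0 \<le> g" and g2: "R \<le> n \<Longrightarrow> ereal (n / R) \<le> g"
  shows "ereal a - g \<le> ereal (R * m)"
proof (cases "n \<le> R")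
  case True
  have "n * m \<le> R * m" using True m(1) by (rule mult_right_mono)
  then have "a \<le> R * m" using a by linarith
  then show ?thesis using g1[OF True] by (cases g) auto
next
  case False
  have "n * m \<le> n * (1 / R)" using m n by (intro mult_left_mono) auto
  then have "a \<le> n / R" using a by simp
  then have "ereal a \<le> ereal (n / R)" by simp
  moreover have "ereal (n / R) \<le> g" using g2 False by simp
  ultimately have "ereal a \<le> g" by (rule order_trans)
  moreover have "0 \<le> R * m" using R m by simp
  ultimately show ?thesis by (cases g) auto
qed

lemma tendsto_zero_bound:
  fixes f :: "'b::real_normed_vector \<Rightarrow> ereal"
  assumes R: "R > 0" and f0: "\<And>x. 0 \<le> f x" and fb: "\<And>x. norm x \<le> 1 / R \<Longrightarrow> f x \<le> ereal (R * norm x)"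
  shows "(f \<longlongrightarrow> 0) (at 0)"
proof (rule order_tendstoI)
  fix a :: ereal assume "a < 0"
  then show "eventually (\<lambda>x. a < f x) (at 0)" using f0 by (intro always_eventually) (meson less_le_trans)
next
  fix a :: ereal assume "0 < a"
  then obtain e where e: "0 < ereal e" "ereal e < a" using ereal_dense2 by blast
  define d where "d = min (1 / R) (e / R)"
  have "\<forall>x. x \<noteq> 0 \<and> dist x 0 < d \<longrightarrow> f x < a"
  proof (intro allI impI)
    fix x :: 'b assume x: "x \<noteq> 0 \<and> dist x 0 < d"
    then have "norm x \<le> 1 / R" "norm x < e / R" by (auto simp: d_def)
    then have "f x \<le> ereal (R * norm x)" "R * norm x < e" using fb R by (auto simp: field_simps)
    then have "f x < ereal e" using le_less_trans[of "f x" "ereal (R * norm x)" "ereal e"] by simp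
    then show "f x < a" using e(2) by (rule less_trans)
  qed
  moreover have "d > 0" using R e by (simp add: d_def)
  ultimately show "eventually (\<lambda>x. f x < a) (at 0)" unfolding eventually_at by blast
qed

lemma tendsto_inf_bound:
  fixes f :: "'b::real_normed_vector \<Rightarrow> ereal"
  assumes d: "d > 0" and fb: "\<And>x. ereal (d * norm x - 1) \<le> f x"
  shows "(f \<longlongrightarrow> \<infinity>) at_infinity"
  unfolding tendsto_PInfty eventually_at_infinity
proof
  fix r :: real
  have "ereal r < f x" if "(r + 2) / d \<le> norm x" for x
  proof -
    have "r + 2 \<le> d * norm x" using that d by (simp add: field_simps)
    then have "ereal r < ereal (d * norm x - 1)" by simp
    then show ?thesis using fb[of x] by (rule less_le_trans)
  qed
  then show "\<exists>b. \<forall>x. b \<le> norm x \<longrightarrow> ereal r < f x" by blast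
qed

lemma near_zero_bound:
  fixes f :: "'b::real_normed_vector \<Rightarrow> ereal"
  assumes lim: "(f \<longlongrightarrow> 0) (at 0)" and f0: "f 0 = 0"
  shows "\<exists>d>0. \<forall>x. norm x < d \<longrightarrow> f x < 1"
proof -
  have "eventually (\<lambda>x. f x < 1) (at 0)" using order_tendstoD(2)[OF lim] by simp
  then obtain d where d: "d > 0" "\<And>x. x \<noteq> 0 \<Longrightarrow> dist x 0 < d \<Longrightarrow> f x < 1"
    unfolding eventually_at by auto
  have "f x < 1" if "norm x < d" for x using d that f0 by (cases "x = 0") auto
  then show ?thesis using d(1) by blast
qed

lemma half_norming:
  fixes y :: "'a::real_normed_vector \<Rightarrow>\<^sub>L real"
  shows "\<exists>u. norm u \<le> 1 \<and> norm y / 2 \<le> blinfun_apply y u"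
proof (rule ccontr)
  assume "\<not> ?thesis"
  then have h: "\<And>u. norm u \<le> 1 \<Longrightarrow> blinfun_apply y u < norm y / 2" by (meson not_le)
  have "norm y \<le> norm y / 2"
  proof (rule norm_blinfun_bound)
    show "0 \<le> norm y / 2" by simp
    fix v
    show "norm (blinfun_apply y v) \<le> norm y / 2 * norm v"
    proof (cases "v = 0")
      case True then show ?thesis by simp
    next
      case False
      define u where "u = v /\<^sub>R norm v"
      have u: "norm u \<le> 1" "norm (- u) \<le> 1" using False unfolding u_def by auto
      have "blinfun_apply y u < norm y / 2" "blinfun_apply y (- u) < norm y / 2" using h u by auto
      then have "\<bar>blinfun_apply y u\<bar> \<le> norm y / 2" by (simp add: blinfun.minus_right)
      moreover have "blinfun_apply y v = norm v * blinfun_apply y u"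
        using False unfolding u_def by (simp add: blinfun.scaleR_right)
      moreover have "norm v * (2 * \<bar>blinfun_apply y u\<bar>) \<le> norm v * norm y"
        using calculation(1) by (intro mult_left_mono) auto
      ultimately show ?thesis by (simp add: abs_mult algebra_simps)
    qed
  qed
  then have "norm y = 0" by simp
  then show False using h[of 0] by simp
qed



lemma closed_term:
  fixes x :: "'a::real_normed_vector"
  shows "closed {y::'a \<Rightarrow>\<^sub>L real. ereal (blinfun_apply y x) - a \<le> c}"
proof -
  have cont: "continuous_on UNIV (\<lambda>y::'a \<Rightarrow>\<^sub>L real. blinfun_apply y x - s)" for s
    by (intro continuous_on_diff continuous_on_const linear_continuous_on blinfun.bounded_linear_left)
  show ?thesis
  proof (cases a)
    case (real s)
    show ?thesis
    proof (cases c)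
      case (real r)
      have "{y::'a \<Rightarrow>\<^sub>L real. ereal (blinfun_apply y x) - a \<le> c} = {y. blinfun_apply y x - s \<le> r}"
        using \<open>a = ereal s\<close> real by auto
      then show ?thesis using closed_Collect_le[OF cont[of s] continuous_on_const] by simp
    next
      case PInf
      then show ?thesis by simp
    next
      case MInf
      then show ?thesis using \<open>a = ereal s\<close> by simp
    qed
  next
    case PInf
    then show ?thesis by simp
  next
    case MInf
    then show ?thesis by (cases "\<infinity> \<le> c") auto
  qed
qed

lemma forward:
  fixes \<phi> :: "'a::banach \<Rightarrow> ereal" and z :: 'a
  assumes orl: "orlicz_function \<phi>" and z: "z \<noteq> 0"
  shows "orlicz_function (convex_conjugate \<phi>)"
proof -
  define \<psi> where "\<psi> = convex_conjugate \<phi>"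
  have \<phi>0: "\<phi> 0 = 0" and \<phi>pos: "\<And>x. 0 \<le> \<phi> x" using orlicz_zero[OF orl z] by auto
  have ev: "\<And>x. \<phi> (- x) = \<phi> x" and cv: "ereal_convex \<phi>"
    and lim0: "(\<phi> \<longlongrightarrow> 0) (at 0)"
    using orl unfolding orlicz_function_def ereal_even_def by auto
  have nm: "\<phi> v \<noteq> -\<infinity>" for v using \<phi>pos[of v] by auto
  have up: "ereal (blinfun_apply y x) - \<phi> x \<le> \<psi> y" for x y unfolding \<psi>_def by (rule conj_upper)
  have \<psi>pos: "0 \<le> \<psi> y" for y using up[of y 0] \<phi>0 by (simp add: zero_ereal_def)
  have evle: "\<psi> (- y) \<le> \<psi> y" for y
    unfolding \<psi>_def convex_conjugate_def[of \<phi> "- y"]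
  proof (rule SUP_least)
    fix x
    have "ereal (blinfun_apply (- y) x) - \<phi> x = ereal (blinfun_apply y (- x)) - \<phi> (- x)"
      by (simp add: blinfun.minus_left blinfun.minus_right ev)
    also have "\<dots> \<le> convex_conjugate \<phi> y" by (rule conj_upper)
    finally show "ereal (blinfun_apply (- y) x) - \<phi> x \<le> convex_conjugate \<phi> y" .
  qed
  have even: "ereal_even \<psi>" unfolding ereal_even_def
    using evle by (metis antisym minus_minus)
  have convex: "ereal_convex \<psi>" unfolding ereal_convex_def
  proof (intro allI impI)
    fix y1 y2 :: "'a \<Rightarrow>\<^sub>L real" and t :: real assume t: "0 < t \<and> t < 1"
    show "\<psi> (t *\<^sub>R y1 + (1 - t) *\<^sub>R y2) \<le> ereal t * \<psi> y1 + ereal (1 - t) * \<psi> y2"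
      unfolding \<psi>_def convex_conjugate_def[of \<phi> "t *\<^sub>R y1 + (1 - t) *\<^sub>R y2"]
    proof (rule SUP_least)
      fix x
      show "ereal (blinfun_apply (t *\<^sub>R y1 + (1 - t) *\<^sub>R y2) x) - \<phi> x
          \<le> ereal t * convex_conjugate \<phi> y1 + ereal (1 - t) * convex_conjugate \<phi> y2"
      proof (cases "\<phi> x")
        case (real s)
        have "ereal (blinfun_apply (t *\<^sub>R y1 + (1 - t) *\<^sub>R y2) x) - \<phi> x
            = ereal t * ereal (blinfun_apply y1 x - s) + ereal (1 - t) * ereal (blinfun_apply y2 x - s)"
        proof -
          have ap: "blinfun_apply (t *\<^sub>R y1 + (1 - t) *\<^sub>R y2) x = t * blinfun_apply y1 x + (1 - t) * blinfun_apply y2 x"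
            by (simp add: blinfun.add_left blinfun.scaleR_left)
          have "t * blinfun_apply y1 x + (1 - t) * blinfun_apply y2 x - s
              = t * (blinfun_apply y1 x - s) + (1 - t) * (blinfun_apply y2 x - s)" by (simp add: algebra_simps)
          then show ?thesis unfolding ap using real by simp
        qed
        also have "\<dots> \<le> ereal t * convex_conjugate \<phi> y1 + ereal (1 - t) * convex_conjugate \<phi> y2"
        proof (intro add_mono ereal_mult_left_mono)
          show "ereal (blinfun_apply y1 x - s) \<le> convex_conjugate \<phi> y1"
            using conj_upper[of y1 x \<phi>] real by simp
          show "ereal (blinfun_apply y2 x - s) \<le> convex_conjugate \<phi> y2"
            using conj_upper[of y2 x \<phi>] real by simp
        qed (use t in auto)
        finally show ?thesis .
      next
        case PInf then show ?thesis by simp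
      next
        case MInf then show ?thesis using nm by simp
      qed
    qed
  qed
  have lsc: "ereal_lsc \<psi>" unfolding ereal_lsc_def
  proof
    fix c
    have "{y. \<psi> y \<le> c} = (\<Inter>x. {y. ereal (blinfun_apply y x) - \<phi> x \<le> c})"
      unfolding \<psi>_def convex_conjugate_def by (auto simp: SUP_le_iff)
    then show "closed {y. \<psi> y \<le> c}" by (simp only:) (rule closed_INT, simp add: closed_term)
  qed
  have \<psi>00: "\<psi> 0 \<le> ereal 0" unfolding \<psi>_def
    by (rule conj_le[OF _ nm]) (metis \<phi>pos ereal_less_eq(5) blinfun.zero_left diff_0 neg_le_0_iff_le)
  have proper: "ereal_proper \<psi>" unfolding ereal_proper_def
  proof
    show "\<forall>x. \<psi> x \<noteq> -\<infinity>" using \<psi>pos by (metis MInfty_neq_ereal(2) ereal_infty_less_eq(2) zero_ereal_def)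
    show "\<exists>x. \<psi> x \<noteq> \<infinity>" using \<psi>00 by (metis PInfty_neq_ereal(1) ereal_infty_less_eq(1))
  qed
  obtain R where R: "R > 0" "\<And>x. R \<le> norm x \<Longrightarrow> ereal (norm x / R) \<le> \<phi> x"
    using orlicz_coercive[OF orl \<phi>0] by blast
  have bnd: "\<psi> y \<le> ereal (R * norm y)" if y: "norm y \<le> 1 / R" for y
    unfolding \<psi>_def convex_conjugate_def
  proof (rule SUP_least)
    fix x
    have "blinfun_apply y x \<le> norm x * norm y"
      using norm_blinfun[of y x] by (simp add: mult.commute)
    then show "ereal (blinfun_apply y x) - \<phi> x \<le> ereal (R * norm y)"
      by (intro pair_bound[OF R(1) norm_ge_zero norm_ge_zero y]) (use \<phi>pos R(2) in auto)
  qed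
  have lim0': "(\<psi> \<longlongrightarrow> 0) (at 0)" by (rule tendsto_zero_bound[OF R(1) \<psi>pos bnd])
  obtain d where d: "d > 0" "\<And>x. norm x < d \<Longrightarrow> \<phi> x < 1" using near_zero_bound[OF lim0 \<phi>0] by blast
  have lb: "ereal (d / 4 * norm y - 1) \<le> \<psi> y" for y
  proof -
    obtain u where u: "norm u \<le> 1" "norm y / 2 \<le> blinfun_apply y u" using half_norming by blast
    define x where "x = (d / 2) *\<^sub>R u"
    have "norm x \<le> d / 2" unfolding x_def using u(1) d(1) by (simp add: mult_left_le)
    then have "\<phi> x < 1" using d by simp
    then obtain s where s: "\<phi> x = ereal s" "s < 1" using \<phi>pos[of x] by (cases "\<phi> x") auto
    have yx: "blinfun_apply y x = d / 2 * blinfun_apply y u" unfolding x_def by (simp add: blinfun.scaleR_right)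
    have "d / 2 * (norm y / 2) \<le> d / 2 * blinfun_apply y u" using u(2) d(1) by (intro mult_left_mono) auto
    then have "d / 4 * norm y - 1 \<le> blinfun_apply y x - s" using yx s(2) by simp
    then have "ereal (d / 4 * norm y - 1) \<le> ereal (blinfun_apply y x) - \<phi> x" using s by simp
    then show ?thesis using up[of y x] by (rule order_trans)
  qed
  have liminf: "(\<psi> \<longlongrightarrow> \<infinity>) at_infinity" by (rule tendsto_inf_bound[of "d / 4"]) (use d lb in auto)
  show ?thesis unfolding orlicz_function_def \<psi>_def[symmetric]
    using even convex lsc proper lim0' liminf by blast
qed

lemma converse:
  fixes \<phi> :: "'a::banach \<Rightarrow> ereal" and z :: 'a
  assumes lsc: "ereal_lsc \<phi>" and cvx: "ereal_convex \<phi>" and prp: "ereal_proper \<phi>"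
    and orl: "orlicz_function (convex_conjugate \<phi>)" and z: "z \<noteq> 0"
  shows "orlicz_function \<phi>"
proof -
  define \<psi> where "\<psi> = convex_conjugate \<phi>"
  have orl': "orlicz_function \<psi>" using orl unfolding \<psi>_def .
  obtain y1 where y1: "norm y1 \<le> 1" "blinfun_apply y1 z = norm z" using norming by blast
  have y10: "y1 \<noteq> 0" using y1 z by auto
  have \<psi>0: "\<psi> 0 = 0" and \<psi>pos: "\<And>y. 0 \<le> \<psi> y" using orlicz_zero[OF orl' y10] by auto
  have ev\<psi>: "\<And>y. \<psi> (- y) = \<psi> y" and lim0\<psi>: "(\<psi> \<longlongrightarrow> 0) (at 0)"
    using orl' unfolding orlicz_function_def ereal_even_def by auto
  have FM: "\<phi> x \<le> (SUP y. ereal (blinfun_apply y x) - \<psi> y)" for x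
    unfolding \<psi>_def by (rule fenchel_moreau[OF lsc cvx prp, of 0]) (use \<psi>0 in \<open>simp add: \<psi>_def\<close>)
  have FY: "ereal (blinfun_apply y x) - \<psi> y \<le> \<phi> x" for x y unfolding \<psi>_def by (rule fenchel_young)
  have evle: "\<phi> (- x) \<le> \<phi> x" for x
  proof -
    have "(SUP y. ereal (blinfun_apply y (- x)) - \<psi> y) \<le> \<phi> x"
    proof (rule SUP_least)
      fix y
      have "ereal (blinfun_apply y (- x)) - \<psi> y = ereal (blinfun_apply (- y) x) - \<psi> (- y)"
        by (simp add: blinfun.minus_left blinfun.minus_right ev\<psi>)
      also have "\<dots> \<le> \<phi> x" by (rule FY)
      finally show "ereal (blinfun_apply y (- x)) - \<psi> y \<le> \<phi> x" .
    qed
    then show ?thesis using FM[of "- x"] by (rule order_trans[rotated])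
  qed
  have even: "ereal_even \<phi>" unfolding ereal_even_def using evle by (metis antisym minus_minus)
  have \<phi>pos: "0 \<le> \<phi> x" for x using FY[of 0 x] \<psi>0 by (simp add: zero_ereal_def)
  obtain R where R: "R > 0" "\<And>y. R \<le> norm y \<Longrightarrow> ereal (norm y / R) \<le> \<psi> y"
    using orlicz_coercive[OF orl' \<psi>0] by blast
  have bnd: "\<phi> x \<le> ereal (R * norm x)" if x: "norm x \<le> 1 / R" for x
  proof -
    have "(SUP y. ereal (blinfun_apply y x) - \<psi> y) \<le> ereal (R * norm x)"
    proof (rule SUP_least)
      fix y
      have "blinfun_apply y x \<le> norm y * norm x"
        using norm_blinfun[of y x] by simp
      then show "ereal (blinfun_apply y x) - \<psi> y \<le> ereal (R * norm x)"
        by (intro pair_bound[OF R(1) norm_ge_zero norm_ge_zero x]) (use \<psi>pos R(2) in auto)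
    qed
    then show ?thesis using FM[of x] by (rule order_trans[rotated])
  qed
  have lim0: "(\<phi> \<longlongrightarrow> 0) (at 0)" by (rule tendsto_zero_bound[OF R(1) \<phi>pos bnd])
  obtain d where d: "d > 0" "\<And>y. norm y < d \<Longrightarrow> \<psi> y < 1" using near_zero_bound[OF lim0\<psi> \<psi>0] by blast
  have lb: "ereal (d / 2 * norm x - 1) \<le> \<phi> x" for x
  proof -
    obtain y0 where y0: "norm y0 \<le> 1" "blinfun_apply y0 x = norm x" using norming by blast
    define y where "y = (d / 2) *\<^sub>R y0"
    have "norm y \<le> d / 2" unfolding y_def using y0(1) d(1) by (simp add: mult_left_le)
    then have "\<psi> y < 1" using d by simp
    then obtain s where s: "\<psi> y = ereal s" "s < 1" using \<psi>pos[of y] by (cases "\<psi> y") auto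
    have yx: "blinfun_apply y x = d / 2 * norm x" unfolding y_def using y0(2) by (simp add: blinfun.scaleR_left)
    have "ereal (d / 2 * norm x - 1) \<le> ereal (blinfun_apply y x) - \<psi> y" using yx s by simp
    then show ?thesis using FY[of y x] by (rule order_trans)
  qed
  have liminf: "(\<phi> \<longlongrightarrow> \<infinity>) at_infinity" by (rule tendsto_inf_bound[of "d / 2"]) (use d lb in auto)
  show ?thesis unfolding orlicz_function_def using even cvx lsc prp lim0 liminf by blast
qed

lemma triv_orlicz:
  fixes \<psi> :: "'b::banach \<Rightarrow> ereal"
  assumes all0: "\<And>x::'b. x = 0" and fin: "\<psi> 0 \<noteq> \<infinity>" "\<psi> 0 \<noteq> -\<infinity>"
  shows "orlicz_function \<psi>"
proof -
  have c: "\<psi> x = \<psi> 0" for x using all0[of x] by simp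
  obtain a where a: "\<psi> 0 = ereal a" using fin by (cases "\<psi> 0") auto
  have even: "ereal_even \<psi>" unfolding ereal_even_def using c by metis
  have convex: "ereal_convex \<psi>" unfolding ereal_convex_def
  proof (intro allI impI)
    fix x y :: 'b and t :: real assume "0 < t \<and> t < 1"
    have "ereal t * ereal a + ereal (1 - t) * ereal a = ereal a" by (simp add: algebra_simps)
    then show "\<psi> (t *\<^sub>R x + (1 - t) *\<^sub>R y) \<le> ereal t * \<psi> x + ereal (1 - t) * \<psi> y"
      using c a by (metis order_refl)
  qed
  have lsc: "ereal_lsc \<psi>" unfolding ereal_lsc_def
  proof
    fix cc
    show "closed {x. \<psi> x \<le> cc}"
    proof (cases "\<psi> 0 \<le> cc")
      case True
      then have "\<forall>x. \<psi> x \<le> cc" using c by metis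
      then have "{x. \<psi> x \<le> cc} = UNIV" by auto
      then show ?thesis by simp
    next
      case False
      then have "\<forall>x. \<not> \<psi> x \<le> cc" using c by metis
      then have "{x. \<psi> x \<le> cc} = {}" by auto
      then show ?thesis by simp
    qed
  qed
  have proper: "ereal_proper \<psi>" unfolding ereal_proper_def using c fin by metis
  have at0: "at (0::'b) = bot"
    unfolding eventually_False[symmetric] eventually_at by (rule exI[of _ 1]) (use all0 in auto)
  have atinf: "(at_infinity :: 'b filter) = bot"
    unfolding eventually_False[symmetric] eventually_at_infinity
    by (rule exI[of _ 1]) (metis all0 norm_zero not_one_le_zero)
  show ?thesis unfolding orlicz_function_def using even convex lsc proper at0 atinf by simp
qed

theorem lemma3p2p3:
  fixes \<phi> :: "'a::banach \<Rightarrow> ereal"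
  assumes "ereal_lsc \<phi>" and "ereal_convex \<phi>" and "ereal_proper \<phi>"
  shows "orlicz_function \<phi> \<longleftrightarrow> orlicz_function (convex_conjugate \<phi>)"
proof (cases "\<exists>z::'a. z \<noteq> 0")
  case True
  then obtain z :: 'a where z: "z \<noteq> 0" by blast
  show ?thesis using forward[OF _ z] converse[OF assms _ z] by blast
next
  case False
  then have all0: "\<And>x::'a. x = 0" by auto
  have dual0: "\<And>y :: 'a \<Rightarrow>\<^sub>L real. y = 0"
    by (rule blinfun_eqI) (metis all0 blinfun.zero_right blinfun.zero_left)
  have nm: "\<phi> 0 \<noteq> -\<infinity>" and ni: "\<phi> 0 \<noteq> \<infinity>"
    using assms(3) all0 unfolding ereal_proper_def by metis+
  have cc: "convex_conjugate \<phi> 0 = - \<phi> 0"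
  proof -
    have eq: "(\<lambda>x. ereal (blinfun_apply 0 x) - \<phi> x) = (\<lambda>x. - \<phi> 0)"
      using all0 by (metis blinfun.zero_left ereal_minus(8) zero_ereal_def)
    have "convex_conjugate \<phi> 0 = (SUP x::'a. - \<phi> 0)" unfolding convex_conjugate_def eq ..
    then show ?thesis by simp
  qed
  obtain a where a: "\<phi> 0 = ereal a" using nm ni by (cases "\<phi> 0") auto
  have c0: "convex_conjugate \<phi> 0 \<noteq> \<infinity>" "convex_conjugate \<phi> 0 \<noteq> -\<infinity>" using cc a by simp_all
  have o1: "orlicz_function \<phi>" using triv_orlicz[where \<psi>=\<phi>] all0 ni nm by blast
  have o2: "orlicz_function (convex_conjugate \<phi>)"
    using triv_orlicz[where \<psi>="convex_conjugate \<phi>"] dual0 c0 by blast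
  show ?thesis using o1 o2 by blast
qed

end
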